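(* Let $P$ and $Q$ be probability distributions on a nonempty set $\mathcal{X}\subseteq\mathbb{R}^d$, let $c\in(0,1)$, and let $h:\mathcal{X}\to\mathbb{R}$ be a fixed measurable function with $\mathbb{E}_{X\sim P}[h(X)^2]<\infty$, $\mathbb{E}_{Y\sim Q}[h(Y)^2]<\infty$ and $\sigma_c(h)>0$. For $\gamma,\nu\in\mathbb{R}$ consider the linearly transformed function $\gamma h+\nu$, and let $(\gamma^*,\nu^* )$ be the minimum of the quadratic function $(\gamma,\nu)\mapsto L_{P,Q,c}(\gamma h+\nu)$. Then $$L_{P,Q,c}(\gamma^* h+\nu^* )=\frac{c(1-c)}{1+\mathrm{SNR}(h)^2}.$$
   Context: For a measurable $h:\mathcal{X}\to\mathbb{R}$ with finite second moments under $P$ and $Q$, define: the mean discrepancy $\tau(P,Q\mid h)=\mathbb{E}_{X\sim P}[h(X)]-\mathbb{E}_{Y\sim Q}[h(Y)]$; the variance term $\sigma_c^2(h)=\dfrac{(1-c)\,\mathrm{Var}_{X\sim P}[h(X)]+c\,\mathrm{Var}_{Y\sim Q}[h(Y)]}{c(1-c)}$ with $\sigma_c(h)\ge 0$ its square root; the signal-to-noise ratio $\mathrm{SNR}(h)=\tau(P,Q\mid h)/\sigma_c(h)$ (defined when $\sigma_c(h)>0$); and the weighted squared loss $L_{P,Q,c}(h)=(1-c)\,\mathbb{E}_{X\sim P}[(1-h(X))^2]+c\,\mathbb{E}_{Y\sim Q}[h(Y)^2]$. *)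

theory Defs
  imports "HOL-Probability.Probability"
begin

definition mean_disc :: "'a measure \<Rightarrow> 'a measure \<Rightarrow> ('a \<Rightarrow> real) \<Rightarrow> real" where
  "mean_disc P Q h = (\<integral>x. h x \<partial>P) - (\<integral>y. h y \<partial>Q)"

definition sigma_sq :: "real \<Rightarrow> 'a measure \<Rightarrow> 'a measure \<Rightarrow> ('a \<Rightarrow> real) \<Rightarrow> real" where
  "sigma_sq c P Q h =
     ((1 - c) * prob_space.variance P h + c * prob_space.variance Q h) / (c * (1 - c))"

definition sigma_c :: "real \<Rightarrow> 'a measure \<Rightarrow> 'a measure \<Rightarrow> ('a \<Rightarrow> real) \<Rightarrow> real" where
  "sigma_c c P Q h = sqrt (sigma_sq c P Q h)"

definition SNR :: "real \<Rightarrow> 'a measure \<Rightarrow> 'a measure \<Rightarrow> ('a \<Rightarrow> real) \<Rightarrow> real" where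
  "SNR c P Q h = mean_disc P Q h / sigma_c c P Q h"

definition wloss :: "real \<Rightarrow> 'a measure \<Rightarrow> 'a measure \<Rightarrow> ('a \<Rightarrow> real) \<Rightarrow> real" where
  "wloss c P Q h = (1 - c) * (\<integral>x. (1 - h x)^2 \<partial>P) + c * (\<integral>y. (h y)^2 \<partial>Q)"

end

theory Submission
  imports Defs
begin

lemma sq_int:
  fixes h :: "'a \<Rightarrow> real"
  assumes "prob_space M" "integrable M h" "integrable M (\<lambda>x. (h x)^2)"
  shows "(\<integral>x. (a + b * h x)^2 \<partial>M) = a^2 + 2*a*b*(\<integral>x. h x \<partial>M) + b^2 * (\<integral>x. (h x)^2 \<partial>M)"
proof -
  interpret prob_space M by fact
  have e: "(\<lambda>x. (a + b * h x)^2) = (\<lambda>x. a^2 + ((2*a*b) * h x + b^2 * (h x)^2))"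
    by (auto simp: power2_eq_square algebra_simps)
  show ?thesis unfolding e using assms(2,3)
    by (simp add: prob_space)
qed

lemma quad_ineq:
  fixes c u w n :: real
  shows "(1-c)*(u-n)^2 + c*(n+w)^2 = c*(1-c)*(u+w)^2 + (n - ((1-c)*u - c*w))^2"
  by (simp add: power2_eq_square algebra_simps)

theorem lemma1:
  fixes X :: "(real ^ 'd) set"
    and P Q :: "(real ^ 'd) measure"
    and h :: "real ^ 'd \<Rightarrow> real"
    and c :: real
  assumes "X \<noteq> {}"
    and "prob_space P" and "prob_space Q"
    and "sets P = sets (restrict_space borel X)"
    and "sets Q = sets (restrict_space borel X)"
    and "c \<in> {0<..<1}"
    and "h \<in> borel_measurable (restrict_space borel X)"
    and "integrable P (\<lambda>x. (h x)^2)" and "integrable Q (\<lambda>y. (h y)^2)"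
    and "sigma_c c P Q h > 0"
  shows "(\<exists>g n. \<forall>g' n'. wloss c P Q (\<lambda>x. g * h x + n) \<le> wloss c P Q (\<lambda>x. g' * h x + n'))
       \<and> (\<forall>g n. (\<forall>g' n'. wloss c P Q (\<lambda>x. g * h x + n) \<le> wloss c P Q (\<lambda>x. g' * h x + n'))
            \<longrightarrow> wloss c P Q (\<lambda>x. g * h x + n) = c * (1 - c) / (1 + (SNR c P Q h)^2))"
proof -
  interpret P: prob_space P by fact
  interpret Q: prob_space Q by fact
  have mP: "h \<in> borel_measurable P" using assms(4,7) measurable_cong_sets by blast
  have mQ: "h \<in> borel_measurable Q" using assms(5,7) measurable_cong_sets by blast
  have iP: "integrable P h" by (rule P.square_integrable_imp_integrable[OF mP assms(8)])
  have iQ: "integrable Q h" by (rule Q.square_integrable_imp_integrable[OF mQ assms(9)])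
  define a1 where "a1 = (\<integral>x. h x \<partial>P)"
  define a2 where "a2 = (\<integral>x. (h x)^2 \<partial>P)"
  define b1 where "b1 = (\<integral>x. h x \<partial>Q)"
  define b2 where "b2 = (\<integral>x. (h x)^2 \<partial>Q)"
  define VV where "VV = sigma_sq c P Q h"
  define t where "t = a1 - b1"
  have c0: "0 < c" "c < 1" using assms(6) by auto
  have VVpos: "VV > 0" using assms(10) unfolding sigma_c_def VV_def
    by (metis real_sqrt_gt_0_iff)
  have VVeq: "c*(1-c)*VV = (1-c)*(a2 - a1^2) + c*(b2 - b1^2)"
    unfolding VV_def sigma_sq_def
    using c0 P.variance_eq[OF iP assms(8)] Q.variance_eq[OF iQ assms(9)]
    by (simp add: a1_def a2_def b1_def b2_def)
  have snr: "(SNR c P Q h)^2 = t^2 / VV"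
    unfolding SNR_def sigma_c_def mean_disc_def t_def a1_def b1_def VV_def
    using VVpos[unfolded VV_def]
    by (simp add: power_divide)
  define F where "F = (\<lambda>g n. (1-c)*((1-n)^2 - 2*(1-n)*g*a1 + g^2*a2) + c*(n^2 + 2*n*g*b1 + g^2*b2))"
  have W: "wloss c P Q (\<lambda>x. g * h x + n) = F g n" for g n
  proof -
    have e1: "(\<lambda>x. (1 - (g * h x + n))^2) = (\<lambda>x. ((1-n) + (-g) * h x)^2)"
      by (auto simp: algebra_simps)
    have e2: "(\<lambda>x. (g * h x + n)^2) = (\<lambda>x. (n + g * h x)^2)"
      by (auto simp: algebra_simps)
    have "wloss c P Q (\<lambda>x. g * h x + n) = (1-c)*(\<integral>x. ((1-n) + (-g) * h x)^2 \<partial>P) + c*(\<integral>x. (n + g * h x)^2 \<partial>Q)"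
      unfolding wloss_def e1 e2 ..
    also have "\<dots> = F g n"
      unfolding sq_int[OF assms(2) iP assms(8), of "1-n" "-g"] sq_int[OF assms(3) iQ assms(9), of n g]
      by (simp add: F_def a1_def a2_def b1_def b2_def power2_eq_square algebra_simps)
    finally show ?thesis .
  qed
  define m where "m = c*(1-c) * VV / (t^2 + VV)"
  have Fdec: "F g n = c*(1-c)*((1 - g*t)^2 + g^2*VV) + (n - ((1-c)*(1-g*a1) - c*(g*b1)))^2" for g n
  proof -
    have "F g n = (1-c)*((1-g*a1)-n)^2 + c*(n+g*b1)^2 + g^2*((1-c)*(a2-a1^2) + c*(b2-b1^2))"
      unfolding F_def by (simp add: power2_eq_square algebra_simps)
    also have "\<dots> = c*(1-c)*((1-g*a1)+g*b1)^2 + (n - ((1-c)*(1-g*a1) - c*(g*b1)))^2 + g^2*(c*(1-c)*VV)"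
      unfolding quad_ineq VVeq ..
    finally show ?thesis unfolding t_def by (simp add: power2_eq_square algebra_simps)
  qed
  have gdec: "(1 - g*t)^2 + g^2*VV = (t^2+VV)*(g - t/(t^2+VV))^2 + VV/(t^2+VV)" for g
  proof -
    have "t^2 + VV > 0" using VVpos by (simp add: add_nonneg_pos)
    define D where "D = t^2 + VV"
    have D0: "D \<noteq> 0" using \<open>t^2 + VV > 0\<close> D_def by simp
    have "D*(g - t/D)^2 + VV/D = D*g^2 - 2*g*t + (t^2 + VV)/D"
      using D0 by (simp add: power2_eq_square field_simps)
    also have "\<dots> = (1 - g*t)^2 + g^2*VV"
      using D0 unfolding D_def by (simp add: power2_eq_square algebra_simps)
    finally show ?thesis unfolding D_def by simp
  qed
  have pos: "t^2 + VV > 0" using VVpos by (simp add: add_nonneg_pos)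
  have lower: "F g n \<ge> m" for g n
  proof -
    have "(t^2+VV)*(g - t/(t^2+VV))^2 \<ge> 0" using pos by simp
    hence "(1 - g*t)^2 + g^2*VV \<ge> VV/(t^2+VV)" using gdec[of g] by linarith
    hence "c*(1-c)*((1 - g*t)^2 + g^2*VV) \<ge> c*(1-c)*(VV/(t^2+VV))"
      using c0 by (intro mult_left_mono) auto
    thus ?thesis unfolding Fdec m_def by (simp add: add_increasing2)
  qed
  define g0 where "g0 = t/(t^2+VV)"
  define n0 where "n0 = (1-c)*(1-g0*a1) - c*(g0*b1)"
  have attain: "F g0 n0 = m"
    unfolding Fdec m_def n0_def gdec g0_def by simp
  have mval: "m = c * (1 - c) / (1 + (SNR c P Q h)^2)"
    unfolding snr m_def using VVpos pos by (simp add: field_simps)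
  show ?thesis
  proof
    show "\<exists>g n. \<forall>g' n'. wloss c P Q (\<lambda>x. g * h x + n) \<le> wloss c P Q (\<lambda>x. g' * h x + n')"
      by (rule exI[of _ g0], rule exI[of _ n0]) (simp add: W attain lower)
  next
    show "\<forall>g n. (\<forall>g' n'. wloss c P Q (\<lambda>x. g * h x + n) \<le> wloss c P Q (\<lambda>x. g' * h x + n'))
            \<longrightarrow> wloss c P Q (\<lambda>x. g * h x + n) = c * (1 - c) / (1 + (SNR c P Q h)^2)"
    proof (intro allI impI)
      fix g n assume H: "\<forall>g' n'. wloss c P Q (\<lambda>x. g * h x + n) \<le> wloss c P Q (\<lambda>x. g' * h x + n')"
      have "F g n \<le> F g0 n0" using H W by metis
      with lower[of g n] attain mval show "wloss c P Q (\<lambda>x. g * h x + n) = c * (1 - c) / (1 + (SNR c P Q h)^2)"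
        by (simp add: W)
    qed
  qed
qed

end
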